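(* Let $G$ be a bipartite graph and $M$ a matching of $G$. Let $C$ be an $M$-cycle of $G$ and let $P = P[x,y]$ be an $M$-path in $G - V(C)$. Put $n = |C|/2$ and assume that $e_G(\{x,y\}, V(C)) > n$. Then for each $i$ with $1 \le i \le n$, the induced subgraph $G[V(P)\cup V(C)]$ contains an $M$-cycle of length $|P| + 2i$.
   Context: Graphs are finite and simple. A cycle $C$ is an $M$-cycle if $|E(C)\cap M|=|C|/2$. An $M$-path $P[x,y]$ is a path with ends $x$ and $y$ whose edges alternate between edges of $M$ and edges not in $M$, beginning and ending with edges of $M$. $|P|$ and $|C|$ denote numbers of vertices. For disjoint vertex sets $S,T$, $e_G(S,T)$ is the number of edges of $G$ between $S$ and $T$. *)

theory Defs
  imports Main
begin

definition graph :: "'a set \<Rightarrow> 'a set set \<Rightarrow> bool" where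
  "graph V E \<longleftrightarrow> finite V \<and>
     (\<forall>e\<in>E. \<exists>u v. u \<noteq> v \<and> u \<in> V \<and> v \<in> V \<and> e = {u, v})"

definition bipartite :: "'a set \<Rightarrow> 'a set set \<Rightarrow> bool" where
  "bipartite V E \<longleftrightarrow> (\<exists>A B. A \<inter> B = {} \<and> A \<union> B = V \<and>
     (\<forall>e\<in>E. \<exists>a\<in>A. \<exists>b\<in>B. e = {a, b}))"

definition matching :: "'a set set \<Rightarrow> 'a set set \<Rightarrow> bool" where
  "matching E M \<longleftrightarrow> M \<subseteq> E \<and> (\<forall>e1\<in>M. \<forall>e2\<in>M. e1 \<noteq> e2 \<longrightarrow> e1 \<inter> e2 = {})"

text \<open>A cycle is represented by the list of its (distinct) vertices in cyclic order.\<close>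
definition cycle_edges :: "'a list \<Rightarrow> 'a set set" where
  "cycle_edges cs = {{cs ! i, cs ! ((i + 1) mod length cs)} | i. i < length cs}"

definition is_cycle :: "'a set set \<Rightarrow> 'a list \<Rightarrow> bool" where
  "is_cycle E cs \<longleftrightarrow> distinct cs \<and> length cs \<ge> 3 \<and> cycle_edges cs \<subseteq> E"

definition M_cycle :: "'a set set \<Rightarrow> 'a set set \<Rightarrow> 'a list \<Rightarrow> bool" where
  "M_cycle E M cs \<longleftrightarrow> is_cycle E cs \<and> 2 * card (cycle_edges cs \<inter> M) = length cs"

definition is_path :: "'a set set \<Rightarrow> 'a list \<Rightarrow> bool" where
  "is_path E ps \<longleftrightarrow> ps \<noteq> [] \<and> distinct ps \<and>
     (\<forall>i. Suc i < length ps \<longrightarrow> {ps ! i, ps ! Suc i} \<in> E)"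

definition M_path :: "'a set set \<Rightarrow> 'a set set \<Rightarrow> 'a list \<Rightarrow> 'a \<Rightarrow> 'a \<Rightarrow> bool" where
  "M_path E M ps x y \<longleftrightarrow> is_path E ps \<and> length ps \<ge> 2 \<and> hd ps = x \<and> last ps = y \<and>
     (\<forall>i. Suc i < length ps \<longrightarrow> ({ps ! i, ps ! Suc i} \<in> M \<longleftrightarrow> even i)) \<and>
     {ps ! (length ps - 2), ps ! (length ps - 1)} \<in> M"

definition induced_edges :: "'a set set \<Rightarrow> 'a set \<Rightarrow> 'a set set" where
  "induced_edges E S = {e \<in> E. e \<subseteq> S}"

definition e_between :: "'a set set \<Rightarrow> 'a set \<Rightarrow> 'a set \<Rightarrow> nat" where
  "e_between E S T = card {e \<in> E. \<exists>u\<in>S. \<exists>v\<in>T. e = {u, v}}"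

end

theory Submission
  imports Defs
begin

lemma window:
  fixes s t a L :: nat
  assumes "a \<le> s" "s < a + L" "a \<le> t" "t < a + L" "s mod L = t mod L"
  shows "s = t"
proof (rule ccontr)
  assume "s \<noteq> t"
  then consider "s < t" | "t < s" by linarith
  thus False
  proof cases
    case 1
    hence "L dvd t - s" using assms(5) mod_eq_dvd_iff_nat[of s t L] by auto
    moreover have "0 < t - s" "t - s < L" using 1 assms by auto
    ultimately show False using nat_dvd_not_less by blast
  next
    case 2
    hence "L dvd s - t" using assms(5) mod_eq_dvd_iff_nat[of t s L] by auto
    moreover have "0 < s - t" "s - t < L" using 2 assms by auto
    ultimately show False using nat_dvd_not_less by blast
  qed
qed

lemma even_mod_even: "even (L::nat) \<Longrightarrow> even (m mod L) \<longleftrightarrow> even m"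
  by (simp add: dvd_mod_iff)

lemma add_mod_cancel: "((a::nat) + r) mod L = (b + r) mod L \<longleftrightarrow> a mod L = b mod L"
  by (simp add: add.commute nat_mod_eq_iff)

lemma cardC: "card {k. k < 2*n \<and> even k = b} = n"
proof (cases b)
  case True
  have "{k. k < 2*n \<and> even k = b} = (\<lambda>j. 2*j) ` {..<n}"
    using True by (auto elim!: evenE)
  moreover have "inj_on (\<lambda>j::nat. 2*j) {..<n}" by (auto intro: inj_onI)
  ultimately show ?thesis by (simp add: card_image)
next
  case False
  have "{k. k < 2*n \<and> even k = b} = (\<lambda>j. 2*j+1) ` {..<n}"
    using False by (auto elim!: oddE)
  moreover have "inj_on (\<lambda>j::nat. 2*j+1) {..<n}" by (auto intro: inj_onI)
  ultimately show ?thesis by (simp add: card_image)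
qed

lemma alt_set:
  fixes S :: "nat set" and L :: nat
  assumes sub: "S \<subseteq> {..<L}" and c: "2 * card S = L"
    and na: "\<forall>k<L. k \<in> S \<longrightarrow> Suc k mod L \<notin> S" and L2: "L \<ge> 2"
  shows "\<forall>k<L. k \<in> S \<longleftrightarrow> (0 \<in> S \<longleftrightarrow> even k)"
proof -
  define s where "s k = Suc k mod L" for k
  have sinj: "inj_on s {..<L}"
  proof (rule inj_onI)
    fix a b assume "a \<in> {..<L}" "b \<in> {..<L}" "s a = s b"
    thus "a = b" using window[of 1 "Suc a" L "Suc b"] unfolding s_def by auto
  qed
  have fin: "finite S" using sub finite_subset by blast
  have im: "s ` S \<subseteq> {..<L} - S" using na sub L2 unfolding s_def by auto
  have c1: "card (s ` S) = card S" using card_image inj_on_subset[OF sinj sub] by blast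
  have c2: "card ({..<L} - S) = card S" using card_Diff_subset[OF fin sub] c by auto
  have eq: "s ` S = {..<L} - S"
    using card_subset_eq[OF _ im] c1 c2 by auto
  have step: "\<forall>k. Suc k < L \<longrightarrow> (k \<in> S \<longleftrightarrow> Suc k \<notin> S)"
  proof (intro allI impI)
    fix k assume k: "Suc k < L"
    have sk: "s k = Suc k" using k unfolding s_def by simp
    show "k \<in> S \<longleftrightarrow> Suc k \<notin> S"
    proof
      assume "k \<in> S" thus "Suc k \<notin> S" using na k by (metis Suc_lessD mod_less)
    next
      assume "Suc k \<notin> S"
      hence "Suc k \<in> s ` S" using eq k by auto
      then obtain k' where "k' \<in> S" "s k' = s k" using sk by auto
      moreover have "k' < L" using sub \<open>k' \<in> S\<close> by auto
      moreover have "k < L" using k by simp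
      ultimately show "k \<in> S" using sinj unfolding inj_on_def by (metis lessThan_iff)
    qed
  qed
  show ?thesis
  proof (intro allI impI)
    fix k assume "k < L"
    thus "k \<in> S \<longleftrightarrow> (0 \<in> S \<longleftrightarrow> even k)"
    proof (induction k)
      case 0 thus ?case by simp
    next
      case (Suc k)
      thus ?case using step by auto
    qed
  qed
qed


lemma cycle_alt:
  assumes mat: "matching E M" and cyc: "M_cycle E M cs"
  shows "even (length cs) \<and> length cs \<ge> 4 \<and> (\<exists>f::nat \<Rightarrow> 'a.
     (\<forall>j. {f j, f (Suc j)} \<in> E \<and> ({f j, f (Suc j)} \<in> M \<longleftrightarrow> even j)) \<and>
     (\<forall>a b. f a = f b \<longleftrightarrow> a mod length cs = b mod length cs) \<and>
     (\<forall>j. f j \<in> set cs) \<and> (\<forall>v\<in>set cs. \<exists>k<length cs. f k = v))"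
proof -
  define L where "L = length cs"
  have dist: "distinct cs" and L3: "L \<ge> 3" and sub: "cycle_edges cs \<subseteq> E"
    and crd: "2 * card (cycle_edges cs \<inter> M) = L"
    using cyc by (auto simp: M_cycle_def is_cycle_def L_def)
  define ed where "ed k = {cs ! k, cs ! (Suc k mod L)}" for k
  have ce: "cycle_edges cs = ed ` {..<L}" unfolding cycle_edges_def ed_def L_def by auto
  have nth_inj: "\<And>a b. a < L \<Longrightarrow> b < L \<Longrightarrow> cs ! a = cs ! b \<longleftrightarrow> a = b"
    using dist by (simp add: L_def nth_eq_iff_index_eq)
  have sl: "\<And>k. Suc k mod L < L" using L3 by simp
  have edinj: "inj_on ed {..<L}"
  proof (rule inj_onI)
    fix a b assume a: "a \<in> {..<L}" and b: "b \<in> {..<L}" and e: "ed a = ed b"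
    show "a = b"
    proof (rule ccontr)
      assume ne: "a \<noteq> b"
      hence "cs ! a \<noteq> cs ! b" using a b nth_inj by auto
      hence "cs ! a = cs ! (Suc b mod L) \<and> cs ! (Suc a mod L) = cs ! b"
        using e unfolding ed_def by (auto simp: doubleton_eq_iff)
      hence h: "a = Suc b mod L" "Suc a mod L = b" using nth_inj a b sl by auto
      show False
      proof (cases "Suc b < L")
        case True
        hence "a = Suc b" using h by simp
        thus False using h L3 True by (cases "Suc a < L") (auto simp: mod_Suc)
      next
        case False
        hence "Suc b = L" using b by auto
        hence "a = 0" using h by simp
        thus False using h L3 \<open>Suc b = L\<close> by auto
      qed
    qed
  qed
  define S where "S = {k. k < L \<and> ed k \<in> M}"
  have SL: "S \<subseteq> {..<L}" unfolding S_def by auto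
  have "cycle_edges cs \<inter> M = ed ` S" using ce S_def by auto
  hence cS: "2 * card S = L" using crd card_image[OF inj_on_subset[OF edinj SL]] by simp
  have noadj: "\<forall>k<L. k \<in> S \<longrightarrow> Suc k mod L \<notin> S"
  proof (intro allI impI notI)
    fix k assume k: "k < L" "k \<in> S" "Suc k mod L \<in> S"
    have kn: "k \<noteq> Suc k mod L"
    proof (cases "Suc k < L")
      case True thus ?thesis by simp
    next
      case False hence "Suc k = L" using k by simp
      thus ?thesis using L3 by simp
    qed
    have ne: "ed k \<noteq> ed (Suc k mod L)"
    proof
      assume "ed k = ed (Suc k mod L)"
      hence "k = Suc k mod L" using inj_onD[OF edinj] k(1) sl by simp
      thus False using kn by simp
    qed
    have m: "ed k \<in> M" "ed (Suc k mod L) \<in> M" using k S_def by auto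
    have i: "cs ! (Suc k mod L) \<in> ed k \<inter> ed (Suc k mod L)" unfolding ed_def by simp
    have "\<forall>e1\<in>M. \<forall>e2\<in>M. e1 \<noteq> e2 \<longrightarrow> e1 \<inter> e2 = {}" using mat unfolding matching_def by simp
    hence "ed k \<inter> ed (Suc k mod L) = {}" using m ne by simp
    thus False using i by simp
  qed
  have alt: "\<forall>k<L. k \<in> S \<longleftrightarrow> (0 \<in> S \<longleftrightarrow> even k)"
  proof -
    have "L \<ge> 2" using L3 by simp
    from alt_set[OF SL cS noadj this] show ?thesis .
  qed
  have evL: "even L" using cS by (metis dvd_triv_left)
  define r where "r = (if 0 \<in> S then 0 else 1::nat)"
  define f where "f j = cs ! ((j + r) mod L)" for j
  have Lp: "L > 0" using L3 by simp
  have edges: "\<forall>j. {f j, f (Suc j)} \<in> E \<and> ({f j, f (Suc j)} \<in> M \<longleftrightarrow> even j)"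
  proof
    fix j
    define k where "k = (j + r) mod L"
    have kL: "k < L" using Lp k_def by simp
    have f1: "f j = cs ! k" unfolding f_def k_def by simp
    have f2: "f (Suc j) = cs ! (Suc k mod L)" unfolding f_def k_def by (simp add: mod_Suc_eq)
    have fe: "{f j, f (Suc j)} = ed k" by (simp add: ed_def f1 f2)
    have "ed k \<in> E" using ce sub kL by auto
    note eE = this
    have m1: "ed k \<in> M \<longleftrightarrow> k \<in> S" using kL S_def by auto
    have m2: "even k \<longleftrightarrow> even (j + r)" unfolding k_def using even_mod_even[OF evL] by blast
    have m3: "k \<in> S \<longleftrightarrow> (0 \<in> S \<longleftrightarrow> even k)" using alt kL by blast
    have kS: "k \<in> S \<longleftrightarrow> even j"
    proof (cases "0 \<in> S")
      case True
      hence "r = 0" unfolding r_def by simp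
      hence "even k \<longleftrightarrow> even j" using m2 by simp
      thus ?thesis using m3 True by blast
    next
      case False
      hence "r = 1" unfolding r_def by simp
      hence "even k \<longleftrightarrow> \<not> even j" using m2 by simp
      thus ?thesis using m3 False by blast
    qed
    show "{f j, f (Suc j)} \<in> E \<and> ({f j, f (Suc j)} \<in> M \<longleftrightarrow> even j)"
      unfolding fe using eE m1 kS by blast
  qed
  have feq: "\<forall>a b. f a = f b \<longleftrightarrow> a mod L = b mod L"
  proof (intro allI)
    fix a b
    have "f a = f b \<longleftrightarrow> (a + r) mod L = (b + r) mod L"
      unfolding f_def using nth_inj[of "(a+r) mod L" "(b+r) mod L"] Lp by simp
    thus "f a = f b \<longleftrightarrow> a mod L = b mod L" using add_mod_cancel by simp
  qed
  have fin: "\<forall>j. f j \<in> set cs"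
  proof
    fix j have "(j + r) mod L < length cs" using Lp unfolding L_def by simp
    thus "f j \<in> set cs" unfolding f_def by (rule nth_mem)
  qed
  have r1: "r \<le> 1" unfolding r_def by simp
  have fsurj: "\<forall>v\<in>set cs. \<exists>k<L. f k = v"
  proof
    fix v assume "v \<in> set cs"
    then obtain t where t: "t < L" "cs ! t = v" unfolding L_def by (auto simp: in_set_conv_nth)
    define k where "k = (t + L - r) mod L"
    have "(k + r) mod L = (t + L - r + r) mod L" unfolding k_def by (simp add: mod_add_left_eq)
    also have "t + L - r + r = t + L" using r1 L3 by simp
    finally have "(k + r) mod L = t" using t by simp
    hence "f k = v" unfolding f_def using t by simp
    moreover have "k < L" using Lp k_def by simp
    ultimately show "\<exists>k<L. f k = v" by blast
  qed
  have "L \<ge> 4" proof -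
    have "L \<noteq> 3" using evL by auto
    thus ?thesis using L3 by simp
  qed
  moreover have "\<exists>f::nat \<Rightarrow> 'a.
     (\<forall>j. {f j, f (Suc j)} \<in> E \<and> ({f j, f (Suc j)} \<in> M \<longleftrightarrow> even j)) \<and>
     (\<forall>a b. f a = f b \<longleftrightarrow> a mod L = b mod L) \<and>
     (\<forall>j. f j \<in> set cs) \<and> (\<forall>v\<in>set cs. \<exists>k<L. f k = v)"
    by (rule exI[of _ f]) (intro conjI edges feq fin fsurj)
  ultimately show ?thesis using evL unfolding L_def[symmetric] by blast
qed

lemma mcycle_intro:
  assumes d: "distinct cs" and l3: "length cs \<ge> 3" and ev: "even (length cs)"
    and ed: "\<forall>k<length cs. {cs!k, cs!(Suc k mod length cs)} \<in> E' \<and>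
              ({cs!k, cs!(Suc k mod length cs)} \<in> M \<longleftrightarrow> even k)"
  shows "M_cycle E' M cs"
proof -
  define L where "L = length cs"
  define e where "e k = {cs!k, cs!(Suc k mod L)}" for k
  have ce: "cycle_edges cs = e ` {..<L}" unfolding cycle_edges_def e_def L_def by auto
  have sub: "cycle_edges cs \<subseteq> E'" using ce ed unfolding e_def L_def by auto
  have "cycle_edges cs \<inter> M = e ` {k. k < L \<and> even k = True}"
    using ce ed unfolding e_def L_def by auto
  moreover have "inj_on e {k. k < L \<and> even k = True}"
  proof (rule inj_onI)
    fix a b assume a: "a \<in> {k. k < L \<and> even k = True}" and b: "b \<in> {k. k < L \<and> even k = True}"
      and eq: "e a = e b"
    have sa: "Suc a < L" "Suc b < L" using a b ev unfolding L_def
      by (metis (mono_tags) Suc_lessI even_Suc mem_Collect_eq)+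
    hence "{cs!a, cs!Suc a} = {cs!b, cs!Suc b}" using eq unfolding e_def by simp
    hence "(cs!a = cs!b) \<or> (cs!a = cs!Suc b)" by (auto simp: doubleton_eq_iff)
    moreover have "cs!a = cs!b \<longleftrightarrow> a = b" "cs!a = cs!Suc b \<longleftrightarrow> a = Suc b"
      using d a b sa unfolding L_def by (auto simp: nth_eq_iff_index_eq)
    ultimately show "a = b" using a b by auto
  qed
  ultimately have "card (cycle_edges cs \<inter> M) = card {k. k < L \<and> even k = True}"
    by (simp add: card_image)
  also have "\<dots> = L div 2" using cardC[of "L div 2" True] ev unfolding L_def by simp
  finally show ?thesis using d l3 sub ev unfolding M_cycle_def is_cycle_def L_def by simp
qed


lemma core:
  assumes mat: "matching E M" and mp: "M_path E M ps x y" and disj: "set ps \<inter> set cs = {}"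
    and sl: "length seg = 2*i" and i1: "1 \<le> i" and ds: "distinct seg" and ss: "set seg \<subseteq> set cs"
    and se: "\<forall>m. Suc m < length seg \<longrightarrow> {seg!m, seg!Suc m} \<in> E \<and> ({seg!m, seg!Suc m} \<in> M \<longleftrightarrow> even m)"
    and ey: "{y, hd seg} \<in> E" and ex: "{x, last seg} \<in> E"
  shows "M_cycle (induced_edges E (set ps \<union> set cs)) M (ps @ seg)"
proof -
  define lp where "lp = length ps"
  define c where "c = ps @ seg"
  define L where "L = length c"
  define S where "S = set ps \<union> set cs"
  from mp have pne: "ps \<noteq> []" and pd: "distinct ps" and pE: "\<forall>i. Suc i < lp \<longrightarrow> {ps!i, ps!Suc i} \<in> E"
    and lp2: "lp \<ge> 2" and hx: "hd ps = x" and ly: "last ps = y"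
    and pM: "\<forall>i. Suc i < lp \<longrightarrow> ({ps!i, ps!Suc i} \<in> M \<longleftrightarrow> even i)"
    and lastM: "{ps!(lp-2), ps!(lp-1)} \<in> M"
    unfolding M_path_def is_path_def lp_def by auto
  have "Suc (lp - 2) < lp" using lp2 by simp
  moreover have "Suc (lp - 2) = lp - 1" using lp2 by simp
  ultimately have "even (lp - 2)" using pM lastM by metis
  then obtain q where "lp - 2 = 2*q" by blast
  hence "lp = 2*q + 2" using lp2 by simp
  hence evlp: "even lp" by simp
  have x0: "ps!0 = x" using hx pne by (simp add: hd_conv_nth)
  have yl: "ps!(lp-1) = y" using ly pne by (simp add: last_conv_nth lp_def)
  have sne: "seg \<noteq> []" using sl i1 by auto
  have h0: "seg!0 = hd seg" by (simp add: hd_conv_nth sne)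
  have lseg: "seg!(2*i-1) = last seg" by (simp add: last_conv_nth sne sl)
  have Ldef: "L = lp + 2*i" unfolding L_def c_def lp_def using sl by simp
  have dsj: "set ps \<inter> set seg = {}" using disj ss by blast
  have dc: "distinct c" unfolding c_def using pd ds dsj by simp
  have L3: "L \<ge> 3" using Ldef lp2 i1 by simp
  have evL: "even L" using Ldef evlp by simp
  have sc: "set c \<subseteq> S" unfolding c_def S_def using ss by auto
  have ind: "\<And>a b. a < L \<Longrightarrow> b < L \<Longrightarrow> {c!a, c!b} \<in> E \<Longrightarrow> {c!a, c!b} \<in> induced_edges E S"
  proof -
    fix a b assume "a < L" "b < L" "{c!a, c!b} \<in> E"
    moreover have "c!a \<in> S" "c!b \<in> S" using \<open>a < L\<close> \<open>b < L\<close> sc unfolding L_def by (auto intro: nth_mem)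
    ultimately show "{c!a, c!b} \<in> induced_edges E S" unfolding induced_edges_def by simp
  qed
  have mt: "\<forall>e1\<in>M. \<forall>e2\<in>M. e1 \<noteq> e2 \<longrightarrow> e1 \<inter> e2 = {}" using mat unfolding matching_def by simp
  have hs: "hd seg \<in> set cs" "last seg \<in> set cs" using sne ss by auto
  have pin: "ps!(lp-2) \<in> set ps" "y \<in> set ps" "x \<in> set ps" "ps!1 \<in> set ps"
  proof -
    have "lp - 2 < length ps" "lp - 1 < length ps" "0 < length ps" "1 < length ps"
      using lp2 unfolding lp_def by auto
    hence "ps!(lp-2) \<in> set ps" "ps!(lp-1) \<in> set ps" "ps!0 \<in> set ps" "ps!1 \<in> set ps"
      using nth_mem by blast+
    thus "ps!(lp-2) \<in> set ps" "y \<in> set ps" "x \<in> set ps" "ps!1 \<in> set ps"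
      unfolding yl x0 .
  qed
  have dj: "\<And>v. v \<in> set ps \<Longrightarrow> v \<notin> set cs" using disj by blast
  have nM1: "{y, hd seg} \<notin> M"
  proof
    assume a: "{y, hd seg} \<in> M"
    have "hd seg \<noteq> ps!(lp-2)" using hs(1) dj[OF pin(1)] by metis
    moreover have "hd seg \<noteq> y" using hs(1) dj[OF pin(2)] by metis
    ultimately have ne: "{y, hd seg} \<noteq> {ps!(lp-2), ps!(lp-1)}" unfolding yl by (auto simp: doubleton_eq_iff)
    have "{y, hd seg} \<inter> {ps!(lp-2), ps!(lp-1)} = {}" using mt a lastM ne by simp
    thus False using yl by auto
  qed
  have M01: "{ps!0, ps!Suc 0} \<in> M" using pM lp2 by auto
  have nM2: "{x, last seg} \<notin> M"
  proof
    assume a: "{x, last seg} \<in> M"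
    have "last seg \<noteq> ps!1" using hs(2) dj[OF pin(4)] by metis
    moreover have "last seg \<noteq> x" using hs(2) dj[OF pin(3)] by metis
    ultimately have ne: "{x, last seg} \<noteq> {ps!0, ps!Suc 0}" unfolding x0 by (auto simp: doubleton_eq_iff)
    have "{x, last seg} \<inter> {ps!0, ps!Suc 0} = {}" using mt a M01 ne by simp
    thus False using x0 by auto
  qed
  have edges: "\<forall>k<L. {c!k, c!(Suc k mod L)} \<in> induced_edges E S \<and> ({c!k, c!(Suc k mod L)} \<in> M \<longleftrightarrow> even k)"
  proof (intro allI impI)
    fix k assume kL: "k < L"
    consider "Suc k < lp" | "Suc k = lp" | "lp \<le> k \<and> Suc k < L" | "Suc k = L" using kL by linarith
    thus "{c!k, c!(Suc k mod L)} \<in> induced_edges E S \<and> ({c!k, c!(Suc k mod L)} \<in> M \<longleftrightarrow> even k)"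
    proof cases
      case 1
      have "Suc k < L" using 1 Ldef by simp
      hence md: "Suc k mod L = Suc k" by simp
      have cc: "c!k = ps!k" "c!Suc k = ps!Suc k" using 1 unfolding c_def lp_def by (auto simp: nth_append)
      show ?thesis using ind[OF kL \<open>Suc k < L\<close>] pE pM 1 unfolding md cc by simp
    next
      case 2
      have "Suc k < L" using 2 Ldef i1 by simp
      hence md: "Suc k mod L = Suc k" by simp
      have k1: "k = lp - 1" using 2 by simp
      have cc: "c!k = y" "c!Suc k = hd seg" using 2 yl h0 unfolding c_def k1
        by (auto simp: nth_append lp_def)
      have "odd k" using 2 evlp by (metis even_Suc)
      thus ?thesis using ind[OF kL \<open>Suc k < L\<close>] ey nM1 unfolding md cc by simp
    next
      case 3
      define m where "m = k - lp"
      have md: "Suc k mod L = Suc k" using 3 by simp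
      have ms: "Suc m < length seg" using 3 Ldef sl unfolding m_def by linarith
      have cc: "c!k = seg!m" "c!Suc k = seg!Suc m" using 3 unfolding c_def lp_def m_def
        by (auto simp: nth_append Suc_diff_le)
      have "k = m + lp" using 3 unfolding m_def by simp
      hence ev: "even k \<longleftrightarrow> even m" using evlp by simp
      show ?thesis using ind[OF kL, of "Suc k"] 3 se ms ev unfolding md cc by simp
    next
      case 4
      have md: "Suc k mod L = 0" using 4 by simp
      have "0 < L" using L3 by simp
      have km: "k - lp = 2*i - 1" "\<not> k < lp" using 4 Ldef i1 by auto
      have cc: "c!k = last seg" "c!0 = x" using km lseg x0 pne unfolding c_def lp_def
        by (auto simp: nth_append)
      have "odd k" using 4 evL by (metis even_Suc)
      moreover have "{last seg, x} = {x, last seg}" by auto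
      ultimately show ?thesis using ind[OF kL \<open>0 < L\<close>] ex nM2 unfolding md cc by simp
    qed
  qed
  have e2: "\<forall>k<length c. {c!k, c!(Suc k mod length c)} \<in> induced_edges E S \<and> ({c!k, c!(Suc k mod length c)} \<in> M \<longleftrightarrow> even k)"
    using edges unfolding L_def .
  have "M_cycle (induced_edges E S) M c"
    by (rule mcycle_intro[OF dc _ _ e2]) (use L3 evL L_def in simp)+
  thus ?thesis unfolding S_def c_def .
qed

lemma mpath_facts:
  assumes mp: "M_path E M ps x y"
  shows "even (length ps) \<and> length ps \<ge> 2 \<and> ps!0 = x \<and> ps!(length ps - 1) = y \<and>
    (\<forall>i. Suc i < length ps \<longrightarrow> {ps!i, ps!Suc i} \<in> E)"
proof -
  define lp where "lp = length ps"
  from mp have pne: "ps \<noteq> []" and pE: "\<forall>i. Suc i < lp \<longrightarrow> {ps!i, ps!Suc i} \<in> E"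
    and lp2: "lp \<ge> 2" and hx: "hd ps = x" and ly: "last ps = y"
    and pM: "\<forall>i. Suc i < lp \<longrightarrow> ({ps!i, ps!Suc i} \<in> M \<longleftrightarrow> even i)"
    and lastM: "{ps!(lp-2), ps!(lp-1)} \<in> M"
    unfolding M_path_def is_path_def lp_def by auto
  have "Suc (lp - 2) < lp" using lp2 by simp
  moreover have "Suc (lp - 2) = lp - 1" using lp2 by simp
  ultimately have "even (lp - 2)" using pM lastM by metis
  then obtain q where "lp - 2 = 2*q" by blast
  hence "lp = 2*q + 2" using lp2 by simp
  hence evlp: "even lp" by simp
  have x0: "ps!0 = x" using hx pne by (simp add: hd_conv_nth)
  have yl: "ps!(lp-1) = y" using ly pne by (simp add: last_conv_nth lp_def)
  show ?thesis using evlp lp2 x0 yl pE unfolding lp_def by blast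
qed

theorem lemma1:
  fixes V :: "'a set" and E M :: "'a set set" and cs ps :: "'a list" and x y :: 'a
  assumes "graph V E" and "bipartite V E" and "matching E M"
    and "M_cycle E M cs"
    and "M_path E M ps x y" and "set ps \<inter> set cs = {}"
    and "e_between E {x, y} (set cs) > length cs div 2"
  shows "\<forall>i. 1 \<le> i \<and> i \<le> length cs div 2 \<longrightarrow>
           (\<exists>cs'. M_cycle (induced_edges E (set ps \<union> set cs)) M cs' \<and>
                  length cs' = length ps + 2 * i)"
proof (intro allI impI)
  fix i assume iass: "1 \<le> i \<and> i \<le> length cs div 2"
  define L where "L = length cs"
  define n where "n = L div 2"
  have i1: "1 \<le> i" and iN: "i \<le> n" using iass by (auto simp: L_def n_def)
  obtain A B where AB: "A \<inter> B = {}" "\<forall>e\<in>E. \<exists>a\<in>A. \<exists>b\<in>B. e = {a,b}"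
    using assms(2) unfolding bipartite_def by blast
  have side: "\<And>u v. {u,v} \<in> E \<Longrightarrow> (u \<in> A \<longleftrightarrow> v \<notin> A)"
  proof -
    fix u v assume "{u,v} \<in> E"
    then obtain a b where ab: "a \<in> A" "b \<in> B" "{u,v} = {a,b}" using AB(2) by blast
    have "b \<notin> A" using AB(1) ab by blast
    thus "u \<in> A \<longleftrightarrow> v \<notin> A" using ab(1,3) by (auto simp: doubleton_eq_iff)
  qed
  have ca: "even L \<and> L \<ge> 4 \<and> (\<exists>f::nat \<Rightarrow> 'a.
     (\<forall>j. {f j, f (Suc j)} \<in> E \<and> ({f j, f (Suc j)} \<in> M \<longleftrightarrow> even j)) \<and>
     (\<forall>a b. f a = f b \<longleftrightarrow> a mod L = b mod L) \<and>
     (\<forall>j. f j \<in> set cs) \<and> (\<forall>v\<in>set cs. \<exists>k<L. f k = v))"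
    using cycle_alt[OF assms(3) assms(4)] unfolding L_def .
  then obtain f where evL: "even L" and L4: "L \<ge> 4"
    and fE: "\<forall>j. {f j, f (Suc j)} \<in> E \<and> ({f j, f (Suc j)} \<in> M \<longleftrightarrow> even j)"
    and feq: "\<forall>a b. f a = f b \<longleftrightarrow> a mod L = b mod L"
    and fin: "\<forall>j. f j \<in> set cs" and fsurj: "\<forall>v\<in>set cs. \<exists>k<L. f k = v"
    by blast
  have Ln: "L = 2*n" using evL n_def by simp
  have iL: "2*i \<le> L" using iN Ln by simp
  have Lp: "0 < L" using L4 by simp
  define lp where "lp = length ps"
  have pf: "even lp \<and> lp \<ge> 2 \<and> ps!0 = x \<and> ps!(lp - 1) = y \<and>
    (\<forall>i. Suc i < lp \<longrightarrow> {ps!i, ps!Suc i} \<in> E)" using mpath_facts[OF assms(5)] unfolding lp_def .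
  hence evlp: "even lp" and lp2: "lp \<ge> 2" and x0: "ps!0 = x" and yl: "ps!(lp - 1) = y"
    and pE: "\<forall>i. Suc i < lp \<longrightarrow> {ps!i, ps!Suc i} \<in> E" by auto
  have ppar: "\<forall>m<lp. ps!m \<in> A \<longleftrightarrow> (x \<in> A \<longleftrightarrow> even m)"
  proof (intro allI impI)
    fix m assume "m < lp"
    thus "ps!m \<in> A \<longleftrightarrow> (x \<in> A \<longleftrightarrow> even m)"
    proof (induction m)
      case 0 thus ?case using x0 by simp
    next
      case (Suc m)
      hence "ps!m \<in> A \<longleftrightarrow> (x \<in> A \<longleftrightarrow> even m)" by simp
      moreover have "ps!m \<in> A \<longleftrightarrow> ps!Suc m \<notin> A" using side pE Suc.prems by blast
      ultimately show ?case by (simp only: even_Suc) blast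
    qed
  qed
  have "lp - 1 < lp" "odd (lp - 1)" using lp2 evlp by auto
  hence yA: "y \<in> A \<longleftrightarrow> x \<notin> A" using ppar yl by (metis (full_types))
  have fpar: "\<forall>j. f j \<in> A \<longleftrightarrow> (f 0 \<in> A \<longleftrightarrow> even j)"
  proof
    fix j show "f j \<in> A \<longleftrightarrow> (f 0 \<in> A \<longleftrightarrow> even j)"
    proof (induction j)
      case 0 thus ?case by simp
    next
      case (Suc j)
      moreover have "f j \<in> A \<longleftrightarrow> f (Suc j) \<notin> A" using side fE by blast
      ultimately show ?case by (simp only: even_Suc) blast
    qed
  qed
  define KX where "KX = {k. k < L \<and> {x, f k} \<in> E}"
  define KY where "KY = {k. k < L \<and> {y, f k} \<in> E}"
  have finK: "finite KX" "finite KY" unfolding KX_def KY_def by auto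
  have "{e \<in> E. \<exists>u\<in>{x,y}. \<exists>v\<in>set cs. e = {u, v}} \<subseteq> (\<lambda>k. {x, f k}) ` KX \<union> (\<lambda>k. {y, f k}) ` KY"
  proof
    fix e assume "e \<in> {e \<in> E. \<exists>u\<in>{x,y}. \<exists>v\<in>set cs. e = {u, v}}"
    then obtain u v where e: "e \<in> E" "u \<in> {x,y}" "v \<in> set cs" "e = {u,v}" by blast
    then obtain k where k: "k < L" "f k = v" using fsurj by blast
    show "e \<in> (\<lambda>k. {x, f k}) ` KX \<union> (\<lambda>k. {y, f k}) ` KY"
    proof (cases "u = x")
      case True
      hence "k \<in> KX" using e k unfolding KX_def by simp
      thus ?thesis using e k True by blast
    next
      case False
      hence "u = y" using e by simp
      hence "k \<in> KY" using e k unfolding KY_def by simp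
      thus ?thesis using e k \<open>u = y\<close> by blast
    qed
  qed
  hence "e_between E {x, y} (set cs) \<le> card ((\<lambda>k. {x, f k}) ` KX \<union> (\<lambda>k. {y, f k}) ` KY)"
    unfolding e_between_def using finK by (intro card_mono) auto
  also have "\<dots> \<le> card ((\<lambda>k. {x, f k}) ` KX) + card ((\<lambda>k. {y, f k}) ` KY)" by (rule card_Un_le)
  also have "\<dots> \<le> card KX + card KY" by (intro add_mono card_image_le finK)
  finally have big: "n < card KX + card KY" using assms(7) unfolding n_def L_def by simp
  define Q where "Q = (f 0 \<in> A \<longleftrightarrow> x \<notin> A)"
  define C where "C = {k. k < L \<and> even k = Q}"
  have cC: "card C = n" unfolding C_def Ln by (rule cardC)
  have KXC: "KX \<subseteq> C"
  proof
    fix k assume "k \<in> KX"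
    hence k: "k < L" "{x, f k} \<in> E" unfolding KX_def by auto
    have "x \<in> A \<longleftrightarrow> f k \<notin> A" using side[OF k(2)] .
    moreover have "f k \<in> A \<longleftrightarrow> (f 0 \<in> A \<longleftrightarrow> even k)" using fpar by blast
    ultimately have "even k = Q" unfolding Q_def by blast
    thus "k \<in> C" using k unfolding C_def by simp
  qed
  have KYC: "\<forall>k\<in>KY. even k = (\<not> Q)"
  proof
    fix k assume "k \<in> KY"
    hence k: "k < L" "{y, f k} \<in> E" unfolding KY_def by auto
    have "y \<in> A \<longleftrightarrow> f k \<notin> A" using side[OF k(2)] .
    moreover have "f k \<in> A \<longleftrightarrow> (f 0 \<in> A \<longleftrightarrow> even k)" using fpar by blast
    ultimately show "even k = (\<not> Q)" using yA unfolding Q_def by blast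
  qed
  define \<tau> where "\<tau> k = (if even k then (k + (2*i - 1)) mod L else (k + (L + 1 - 2*i)) mod L)" for k
  have oddc: "odd (2*i - 1)" "odd (L + 1 - 2*i)" using i1 iL evL by auto
  have \<tau>C: "\<tau> ` KY \<subseteq> C"
  proof
    fix t assume "t \<in> \<tau> ` KY"
    then obtain k where k: "k \<in> KY" "t = \<tau> k" by blast
    have "t < L" using k(2) Lp unfolding \<tau>_def by simp
    moreover have "even t = Q"
    proof (cases "even k")
      case True
      hence "t = (k + (2*i - 1)) mod L" using k unfolding \<tau>_def by simp
      hence "even t \<longleftrightarrow> even (k + (2*i - 1))" using even_mod_even[OF evL] by simp
      hence "\<not> even t" using True oddc by simp
      thus ?thesis using KYC k(1) True by blast
    next
      case False
      hence "t = (k + (L + 1 - 2*i)) mod L" using k unfolding \<tau>_def by simp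
      hence "even t \<longleftrightarrow> even (k + (L + 1 - 2*i))" using even_mod_even[OF evL] by simp
      hence "even t" using False oddc by simp
      thus ?thesis using KYC k(1) False by blast
    qed
    ultimately show "t \<in> C" unfolding C_def by simp
  qed
  have \<tau>inj: "inj_on \<tau> KY"
  proof (rule inj_onI)
    fix a b assume ab: "a \<in> KY" "b \<in> KY" "\<tau> a = \<tau> b"
    have "even a = even b" using KYC ab by blast
    moreover have "a < L" "b < L" using ab unfolding KY_def by auto
    ultimately show "a = b" using ab(3) unfolding \<tau>_def
      by (cases "even a") (auto simp: add_mod_cancel)
  qed
  obtain k where kY: "k \<in> KY" and kX: "\<tau> k \<in> KX"
  proof (rule ccontr)
    assume "\<not> thesis"
    hence dj: "KX \<inter> \<tau> ` KY = {}" using that by blast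
    have "card KX + card KY = card KX + card (\<tau> ` KY)" using card_image[OF \<tau>inj] by simp
    also have "\<dots> = card (KX \<union> \<tau> ` KY)" using dj finK by (simp add: card_Un_disjoint)
    also have "\<dots> \<le> card C" using KXC \<tau>C unfolding C_def by (intro card_mono) auto
    finally show False using big cC by simp
  qed
  have kL: "k < L" using kY unfolding KY_def by simp
  have segex: "\<exists>seg. length seg = 2*i \<and> distinct seg \<and> set seg \<subseteq> set cs \<and>
    (\<forall>m. Suc m < length seg \<longrightarrow> {seg!m, seg!Suc m} \<in> E \<and> ({seg!m, seg!Suc m} \<in> M \<longleftrightarrow> even m)) \<and>
    {y, hd seg} \<in> E \<and> {x, last seg} \<in> E"
  proof (cases "even k")
    case True
    define seg where "seg = map (\<lambda>m. f (k + m)) [0..<2*i]"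
    have ls: "length seg = 2*i" unfolding seg_def by simp
    have sn: "\<And>m. m < 2*i \<Longrightarrow> seg!m = f (k + m)" unfolding seg_def by simp
    have "inj_on (\<lambda>m. f (k + m)) {0..<2*i}"
    proof (rule inj_onI)
      fix a b assume "a \<in> {0..<2*i}" "b \<in> {0..<2*i}" "f (k + a) = f (k + b)"
      thus "a = b" using feq window[of k "k+a" L "k+b"] iL by auto
    qed
    hence ds: "distinct seg" unfolding seg_def by (simp add: distinct_map)
    have ss: "set seg \<subseteq> set cs" unfolding seg_def using fin by auto
    have se: "\<forall>m. Suc m < length seg \<longrightarrow> {seg!m, seg!Suc m} \<in> E \<and> ({seg!m, seg!Suc m} \<in> M \<longleftrightarrow> even m)"
    proof (intro allI impI)
      fix m assume m: "Suc m < length seg"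
      hence "seg!m = f (k + m)" "seg!Suc m = f (Suc (k + m))" using sn ls by auto
      moreover have "even (k + m) \<longleftrightarrow> even m" using True by simp
      ultimately show "{seg!m, seg!Suc m} \<in> E \<and> ({seg!m, seg!Suc m} \<in> M \<longleftrightarrow> even m)"
        using fE by metis
    qed
    have sne: "seg \<noteq> []" using ls i1 by auto
    have "hd seg = seg!0" using sne by (simp add: hd_conv_nth)
    also have "\<dots> = f k" using sn[of 0] i1 by simp
    finally have "hd seg = f k" .
    hence hy: "{y, hd seg} \<in> E" using kY unfolding KY_def by simp
    have "last seg = seg!(2*i - 1)" using sne ls by (simp add: last_conv_nth)
    also have "\<dots> = f (k + (2*i - 1))" using sn[of "2*i - 1"] i1 by simp
    also have "\<dots> = f (\<tau> k)" unfolding \<tau>_def using True feq by simp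
    finally have lx: "{x, last seg} \<in> E" using kX unfolding KX_def by simp
    show ?thesis using ls ds ss se hy lx by blast
  next
    case False
    define seg where "seg = map (\<lambda>m. f (k + L - m)) [0..<2*i]"
    have ls: "length seg = 2*i" unfolding seg_def by simp
    have sn: "\<And>m. m < 2*i \<Longrightarrow> seg!m = f (k + L - m)" unfolding seg_def by simp
    have "inj_on (\<lambda>m. f (k + L - m)) {0..<2*i}"
    proof (rule inj_onI)
      fix a b assume ab: "a \<in> {0..<2*i}" "b \<in> {0..<2*i}" "f (k + L - a) = f (k + L - b)"
      hence "(k + L - a) mod L = (k + L - b) mod L" using feq by blast
      hence "k + L - a = k + L - b" using window[of "k + L + 1 - 2*i" "k + L - a" L "k + L - b"] ab iL by auto
      thus "a = b" using ab iL by auto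
    qed
    hence ds: "distinct seg" unfolding seg_def by (simp add: distinct_map)
    have ss: "set seg \<subseteq> set cs" unfolding seg_def using fin by auto
    have se: "\<forall>m. Suc m < length seg \<longrightarrow> {seg!m, seg!Suc m} \<in> E \<and> ({seg!m, seg!Suc m} \<in> M \<longleftrightarrow> even m)"
    proof (intro allI impI)
      fix m assume m: "Suc m < length seg"
      define j where "j = k + L - Suc m"
      have jj: "k + L - m = Suc j" using m ls iL unfolding j_def by simp
      have "seg!m = f (Suc j)" "seg!Suc m = f j" using sn ls m jj unfolding j_def by auto
      moreover have "even j \<longleftrightarrow> even m"
      proof -
        have "j + Suc m = k + L" using m ls iL unfolding j_def by simp
        thus ?thesis using False evL by (metis even_add even_Suc)
      qed
      moreover have "{f (Suc j), f j} = {f j, f (Suc j)}" by auto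
      ultimately show "{seg!m, seg!Suc m} \<in> E \<and> ({seg!m, seg!Suc m} \<in> M \<longleftrightarrow> even m)"
        using fE by metis
    qed
    have sne: "seg \<noteq> []" using ls i1 by auto
    have "hd seg = seg!0" using sne by (simp add: hd_conv_nth)
    also have "\<dots> = f (k + L)" using sn[of 0] i1 by simp
    also have "\<dots> = f k" using feq by simp
    finally have hy: "{y, hd seg} \<in> E" using kY unfolding KY_def by simp
    have "last seg = seg!(2*i - 1)" using sne ls by (simp add: last_conv_nth)
    also have "\<dots> = f (k + L - (2*i - 1))" using sn[of "2*i - 1"] i1 by simp
    also have "k + L - (2*i - 1) = k + (L + 1 - 2*i)" using i1 iL by simp
    also have "f \<dots> = f (\<tau> k)" unfolding \<tau>_def using False feq by simp
    finally have lx: "{x, last seg} \<in> E" using kX unfolding KX_def by simp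
    show ?thesis using ls ds ss se hy lx by blast
  qed
  then obtain seg where sg: "length seg = 2*i" "distinct seg" "set seg \<subseteq> set cs"
    "\<forall>m. Suc m < length seg \<longrightarrow> {seg!m, seg!Suc m} \<in> E \<and> ({seg!m, seg!Suc m} \<in> M \<longleftrightarrow> even m)"
    "{y, hd seg} \<in> E" "{x, last seg} \<in> E" by blast
  have "M_cycle (induced_edges E (set ps \<union> set cs)) M (ps @ seg)"
    by (rule core[OF assms(3) assms(5) assms(6) sg(1) i1 sg(2) sg(3) sg(4) sg(5) sg(6)])
  moreover have "length (ps @ seg) = length ps + 2*i" using sg(1) by simp
  ultimately show "\<exists>cs'. M_cycle (induced_edges E (set ps \<union> set cs)) M cs' \<and>
                  length cs' = length ps + 2 * i" by blast
qed

end
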